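(* Let $n\geq 4$ be an integer and let $k\in\{2,3,\dots,\lfloor n/2\rfloor\}$. Then $$n\frac{\sin(\pi k/n)}{\sin(\pi/n)}>k(n-k)+1.$$ *)

theory Defs
  imports Complex_Main
begin

end

theory Submission
  imports Defs "HOL-Analysis.Convex"
begin

lemma cos_jordan:
  fixes t :: real
  assumes "0 \<le> t" "t \<le> 1"
  shows "1 - t \<le> cos (t * pi / 2)"
proof -
  have cv: "convex_on {0..pi/2} (\<lambda>x. - cos x)"
  proof (rule f''_ge0_imp_convex[where f' = "\<lambda>x. sin x" and f'' = "\<lambda>x. cos x"])
    show "convex {0..pi/2::real}" by simp
    show "\<And>x. x \<in> {0..pi/2} \<Longrightarrow> ((\<lambda>x. - cos x) has_real_derivative sin x) (at x)"
      by (auto intro!: derivative_eq_intros)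
    show "\<And>x. x \<in> {0..pi/2} \<Longrightarrow> (sin has_real_derivative cos x) (at x)"
      by (auto intro!: derivative_eq_intros)
    show "\<And>x. x \<in> {0..pi/2} \<Longrightarrow> 0 \<le> cos x"
      by (auto intro!: cos_ge_zero)
  qed
  have "- cos ((1 - t) *\<^sub>R 0 + t *\<^sub>R (pi/2)) \<le> (1 - t) * (- cos 0) + t * (- cos (pi/2))"
    by (rule convex_onD[OF cv]) (use assms in auto)
  then show ?thesis by (simp add: mult.commute)
qed

lemma step_ineq:
  fixes n j :: nat
  assumes "n \<ge> 4" "1 \<le> j" "2 * j + 1 < n"
  shows "real n * (sin (real (j+1) * (pi / n)) - sin (real j * (pi / n)))
         > (real n - 2 * real j - 1) * sin (pi / n)"
proof -
  define h where "h = pi / (2 * real n)"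
  define x where "x = (2 * real j + 1) * h"
  have npos: "real n > 0" using assms by simp
  have h0: "0 < h" using npos by (simp add: h_def)
  have hlt: "h < pi" using assms by (simp add: h_def field_simps)
  have sh: "sin h > 0" using h0 hlt sin_gt_zero by blast
  have ch: "cos h < 1"
  proof -
    have "cos h \<noteq> 1"
    proof
      assume "cos h = 1"
      then have "sin h ^ 2 = 0" using sin_cos_squared_add[of h] by simp
      with sh show False by simp
    qed
    moreover have "cos h \<le> 1" by simp
    ultimately show ?thesis by linarith
  qed
  have d1: "sin (real (j+1) * (pi / n)) - sin (real j * (pi / n)) = 2 * sin h * cos x"
  proof -
    have a1: "(real (j+1) * (pi / n) - real j * (pi / n)) / 2 = h"
      using npos by (simp add: h_def field_simps)
    have a2: "(real (j+1) * (pi / n) + real j * (pi / n)) / 2 = x"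
      using npos by (simp add: h_def x_def field_simps)
    show ?thesis unfolding sin_diff_sin a1 a2 by simp
  qed
  have d2: "sin (pi / n) = 2 * sin h * cos h"
    using sin_double[of h] by (simp add: h_def)
  define t where "t = (2 * real j + 1) / real n"
  have t0: "0 \<le> t" "t \<le> 1" using assms npos by (auto simp: t_def field_simps)
  have xt: "x = t * pi / 2" using npos by (simp add: x_def t_def h_def field_simps)
  have "1 - t \<le> cos x" using cos_jordan[OF t0] unfolding xt .
  then have c1: "real n - 2 * real j - 1 \<le> real n * cos x"
    using npos by (simp add: t_def field_simps)
  have pos: "real n - 2 * real j - 1 > 0" using assms by linarith
  have "(real n - 2 * real j - 1) * cos h < real n - 2 * real j - 1"
    using pos ch by simp
  then have "(real n - 2 * real j - 1) * cos h < real n * cos x" using c1 by linarith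
  then have "2 * sin h * ((real n - 2 * real j - 1) * cos h) < 2 * sin h * (real n * cos x)"
    using sh by simp
  then show ?thesis unfolding d1 d2 by (simp add: algebra_simps)
qed

theorem proposition5p2:
  fixes n k :: nat
  assumes "n \<ge> 4" and "2 \<le> k" and "k \<le> n div 2"
  shows "real n * sin (pi * real k / real n) / sin (pi / real n) > real (k * (n - k)) + 1"
proof -
  define s where "s = sin (pi / real n)"
  define F where "F = (\<lambda>j::nat. real n * sin (real j * (pi / n)) - (real j * (real n - real j) + 1) * s)"
  have npos: "real n > 0" using assms by simp
  have spos: "s > 0" unfolding s_def using assms
    by (intro sin_gt_zero) (auto simp: field_simps)
  have F1: "F 1 = 0" by (simp add: F_def s_def algebra_simps)
  have stepF: "F (j+1) > F j" if "1 \<le> j" "2 * j + 1 < n" for j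
  proof -
    have "F (j+1) - F j = real n * (sin (real (j+1) * (pi / n)) - sin (real j * (pi / n)))
          - (real n - 2 * real j - 1) * s"
      by (simp add: F_def algebra_simps)
    then show ?thesis using step_ineq[OF assms(1) that] by (simp add: s_def)
  qed
  have main: "2 \<le> j \<Longrightarrow> j \<le> n div 2 \<Longrightarrow> F j > 0" for j
  proof (induction j rule: nat_induct_at_least)
    case base
    then show ?case using stepF[of 1] F1 assms(1) by (simp add: numeral_2_eq_2)
  next
    case (Suc m)
    then have "F m > 0" by simp
    moreover have "F (m+1) > F m" using Suc by (intro stepF) auto
    ultimately show ?case by simp
  qed
  have Fk: "F k > 0" using main assms by simp
  have kn: "k \<le> n" using assms by simp
  have e: "real (k * (n - k)) = real k * (real n - real k)" using kn by (simp add: of_nat_diff)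
  have "(real (k * (n - k)) + 1) * s < real n * sin (pi * real k / real n)"
    using Fk unfolding e by (simp add: F_def mult.commute)
  then show ?thesis using spos by (simp add: s_def pos_less_divide_eq)
qed

end
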